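(* For any $r_0>0$ and $0<b\le1/4$ there exists $B>1$ such that for every sequence of disks $D(z_j,r_j)$, $j\in\mathbb{N}$, satisfying $\sum_{|z_j|\le r}r_j\le r/B$ for all $r>0$, and for every point $z\notin D(r_0)$, there is $r_z$ with $0<r_z\le b|z|$ such that the circle $\partial D(z,r_z)$ does not intersect $\bigcup_{j\in\mathbb{N}}D(z_j,r_j)$.
   Context: $D(z,r)=\{w:|w-z|<r\}$, $D(r)=D(0,r)$. *)

theory Defs
  imports "HOL-Analysis.Analysis"
begin

end

theory Submission
  imports Defs
begin

lemma single_bound:
  fixes rs :: "nat \<Rightarrow> real" and A :: "nat set"
  assumes "\<forall>j. rs j > 0" "rs summable_on A" "j \<in> A"
  shows "rs j \<le> infsum rs A"
proof -
  have "infsum rs {j} \<le> infsum rs A"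
    by (rule infsum_mono_neutral) (use assms in \<open>auto intro: less_imp_le\<close>)
  thus ?thesis by simp
qed

lemma cover_lemma:
  fixes c rs :: "nat \<Rightarrow> real" and J :: "nat set" and L S :: real
  assumes pos: "\<forall>j. rs j > 0" and hs: "(rs has_sum S) J" and L: "L > 2 * S"
  shows "\<exists>t\<in>{0<..L}. \<forall>j\<in>J. t \<notin> ball (c j) (rs j)"
proof (rule ccontr)
  assume "\<not> ?thesis"
  hence sub: "{0<..L} \<subseteq> (\<Union>j. (if j \<in> J then ball (c j) (rs j) else {}))" by auto
  define g where "g j = (if j \<in> J then rs j else 0)" for j
  have "(g has_sum S) UNIV"
  proof -
    have "(g has_sum S) UNIV = (rs has_sum S) J"
      by (rule has_sum_cong_neutral) (auto simp: g_def)
    thus ?thesis using hs by simp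
  qed
  hence gs: "g sums S" by (rule has_sum_imp_sums)
  have g0: "\<And>j. 0 \<le> g j" using pos by (auto simp: g_def less_imp_le)
  have gs2: "(\<lambda>j. 2 * g j) sums (2 * S)" using sums_mult[OF gs, of 2] by simp
  have meq: "emeasure lborel (if j \<in> J then ball (c j) (rs j) else {}) = ennreal (2 * g j)" for j
  proof (cases "j \<in> J")
    case True
    have "ball (c j) (rs j) = {c j - rs j <..< c j + rs j}"
      by (auto simp: ball_def dist_real_def abs_less_iff)
    thus ?thesis using True pos[rule_format, of j] by (simp add: g_def)
  qed (simp add: g_def)
  have S0: "0 \<le> S" using hs pos by (meson has_sum_nonneg less_imp_le)
  have "ennreal L = emeasure lborel {0<..L}" using S0 L by simp
  also have "\<dots> \<le> emeasure lborel (\<Union>j. (if j \<in> J then ball (c j) (rs j) else {}))"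
    by (rule emeasure_mono[OF sub]) auto
  also have "\<dots> \<le> (\<Sum>j. emeasure lborel (if j \<in> J then ball (c j) (rs j) else {}))"
    by (rule emeasure_subadditive_countably) auto
  also have "\<dots> = (\<Sum>j. ennreal (2 * g j))" by (simp add: meq)
  also have "\<dots> = ennreal (2 * S)" by (rule suminf_ennreal_eq) (use g0 gs2 in auto)
  finally have "ennreal L \<le> ennreal (2 * S)" .
  thus False using L S0 by (simp add: ennreal_le_iff)
qed

theorem mainTheorem16:
  fixes r0 b :: real
  assumes "r0 > 0" and "0 < b" and "b \<le> 1/4"
  shows "\<exists>B>1. \<forall>(zs :: nat \<Rightarrow> complex) (rs :: nat \<Rightarrow> real).
           (\<forall>j. rs j > 0) \<longrightarrow>
           (\<forall>r>0. rs summable_on {j. norm (zs j) \<le> r} \<and>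
                  infsum rs {j. norm (zs j) \<le> r} \<le> r / B) \<longrightarrow>
           (\<forall>z. z \<notin> ball 0 r0 \<longrightarrow>
              (\<exists>rz. 0 < rz \<and> rz \<le> b * norm z \<and>
                    sphere z rz \<inter> (\<Union>j. ball (zs j) (rs j)) = {}))"
proof (rule exI[of _ "8 / b + 3"], intro conjI allI impI)
  define B where "B = 8 / b + 3"
  have B3: "B \<ge> 3" using assms by (simp add: B_def)
  have bB: "b * B = 8 + 3 * b" using assms by (simp add: B_def field_simps)
  show "1 < 8 / b + 3" using assms by (simp add: add_pos_pos)
  fix zs :: "nat \<Rightarrow> complex" and rs :: "nat \<Rightarrow> real" and z :: complex
  assume pos: "\<forall>j. rs j > 0"
    and H0: "\<forall>r>0. rs summable_on {j. norm (zs j) \<le> r} \<and>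
                  infsum rs {j. norm (zs j) \<le> r} \<le> r / (8 / b + 3)"
    and zn: "z \<notin> ball 0 r0"
  have H: "\<forall>r>0. rs summable_on {j. norm (zs j) \<le> r} \<and>
                  infsum rs {j. norm (zs j) \<le> r} \<le> r / B" using H0 by (simp add: B_def)
  define n where "n = norm z"
  have n0: "n > 0" using zn assms by (auto simp: n_def)
  define J where "J = {j. norm (zs j) \<le> 2 * n}"
  have sJ: "rs summable_on J" and iJ: "infsum rs J \<le> 2 * n / B"
    using H n0 by (auto simp: J_def)
  have hs: "(rs has_sum infsum rs J) J" using sJ by simp
  have "2 * infsum rs J \<le> 4 * n / B" using iJ by simp
  also have "\<dots> < b * n"
  proof -
    have "4 * n < (b * B) * n" using bB assms n0 by (simp add: mult_strict_right_mono)
    thus ?thesis using B3 by (simp add: field_simps)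
  qed
  finally have L: "2 * infsum rs J < b * n" .
  obtain t where t: "t \<in> {0<..b*n}" and tJ: "\<forall>j\<in>J. t \<notin> ball (norm (zs j - z)) (rs j)"
    using cover_lemma[OF pos hs L, of "\<lambda>j. norm (zs j - z)"] by blast
  show "\<exists>rz. 0 < rz \<and> rz \<le> b * norm z \<and>
                    sphere z rz \<inter> (\<Union>j. ball (zs j) (rs j)) = {}"
  proof (intro exI[of _ t] conjI)
    show "0 < t" "t \<le> b * norm z" using t by (auto simp: n_def)
    show "sphere z t \<inter> (\<Union>j. ball (zs j) (rs j)) = {}"
    proof (rule ccontr)
      assume "\<not> ?thesis"
      then obtain w where "w \<in> sphere z t" "w \<in> (\<Union>j. ball (zs j) (rs j))" by blast
      then obtain j where w1: "dist z w = t" and w2: "dist (zs j) w < rs j" by auto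
      have d1: "dist (zs j) z \<le> dist (zs j) w + dist w z" by (rule dist_triangle)
      have d2: "dist z w \<le> dist z (zs j) + dist (zs j) w" by (rule dist_triangle)
      have nd: "norm (zs j - z) = dist (zs j) z" by (simp add: dist_norm)
      show False
      proof (cases "j \<in> J")
        case True
        have "t \<in> ball (norm (zs j - z)) (rs j)"
          using d1 d2 w1 w2 nd by (auto simp: dist_real_def dist_commute abs_less_iff)
        thus False using tJ True by blast
      next
        case False
        hence big: "norm (zs j) > 2 * n" by (simp add: J_def)
        have zj0: "norm (zs j) > 0" using big n0 by linarith
        have "rs j \<le> infsum rs {k. norm (zs k) \<le> norm (zs j)}"
          by (rule single_bound[OF pos]) (use H zj0 in auto)
        also have "\<dots> \<le> norm (zs j) / B" using H zj0 by auto
        also have "\<dots> \<le> norm (zs j) / 3" using B3 zj0 by (intro divide_left_mono) auto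
        finally have rj: "rs j \<le> norm (zs j) / 3" .
        have "norm (zs j) \<le> n + dist (zs j) z" unfolding n_def dist_norm
          by (metis add.commute diff_add_cancel norm_triangle_ineq)
        moreover have "b * n \<le> n / 4" using assms n0 by simp
        ultimately show False using d1 w1 w2 rj big t by (auto simp: dist_commute)
      qed
    qed
  qed
qed

end
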